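(* Let $n\geq1$. The assignment $\rho_i\mapsto\sigma_1\sigma_2\cdots\sigma_i$ ($1\leq i\leq n$) extends to a group isomorphism from the group with presentation $$\langle\rho_1,\dots,\rho_n\mid\rho_1\rho_j\rho_i=\rho_{i+1}\rho_j\ \text{for } 1\leq i<j\leq n\rangle$$ onto the braid group $\mathcal{B}_{n+1}$; its inverse sends $\sigma_i\mapsto\rho_{i-1}^{-1}\rho_i$ (with $\rho_0=1$). Under this isomorphism, the image of the monoid $\mathcal{H}_n^+$ with the same presentation is the submonoid $\Sigma_n$ of $\mathcal{B}_{n+1}$.
   Context: $\mathcal{B}_{n+1}$ is the braid group with generators $\sigma_1,\dots,\sigma_n$ and relations $\sigma_i\sigma_{i+1}\sigma_i=\sigma_{i+1}\sigma_i\sigma_{i+1}$ ($1\leq i<n$), $\sigma_i\sigma_j=\sigma_j\sigma_i$ ($|i-j|>1$). $\mathcal{H}_n^+$ is the monoid with generators $\rho_1,\dots,\rho_n$ and relations $\rho_1\rho_j\rho_i=\rho_{i+1}\rho_j$ for $1\leq i<j\leq n$. $\Sigma_n$ is the submonoid of $\mathcal{B}_{n+1}$ generated by $\sigma_1,\ \sigma_1\sigma_2,\ \dots,\ \sigma_1\sigma_2\cdots\sigma_n$. *)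

theory Defs
  imports "HOL-Algebra.Group"
begin

text \<open>A letter is a pair (generator, inverted?); True means the formal inverse.
  Words over a generator set S are lists of letters whose generators lie in S.\<close>

type_synonym 'a gword = "('a \<times> bool) list"

definition gwords :: "'a set \<Rightarrow> 'a gword set" where
  "gwords S = {w. fst ` set w \<subseteq> S}"

definition pos_word :: "'a list \<Rightarrow> 'a gword" where
  "pos_word l = map (\<lambda>x. (x, False)) l"

text \<open>The congruence on words over S generated by free cancellation and the
  defining relations R (pairs of positive words l = r).\<close>

inductive pres_rel :: "'a set \<Rightarrow> ('a list \<times> 'a list) set \<Rightarrow> 'a gword \<Rightarrow> 'a gword \<Rightarrow> bool"
  for S R where
  refl: "w \<in> gwords S \<Longrightarrow> pres_rel S R w w"
| sym: "pres_rel S R u w \<Longrightarrow> pres_rel S R w u"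
| trans: "pres_rel S R u v \<Longrightarrow> pres_rel S R v w \<Longrightarrow> pres_rel S R u w"
| cancel: "u \<in> gwords S \<Longrightarrow> v \<in> gwords S \<Longrightarrow> a \<in> S \<Longrightarrow>
    pres_rel S R (u @ [(a, b), (a, \<not> b)] @ v) (u @ v)"
| rel: "(l, r) \<in> R \<Longrightarrow> u \<in> gwords S \<Longrightarrow> v \<in> gwords S \<Longrightarrow>
    pres_rel S R (u @ pos_word l @ v) (u @ pos_word r @ v)"

definition pres_class :: "'a set \<Rightarrow> ('a list \<times> 'a list) set \<Rightarrow> 'a gword \<Rightarrow> 'a gword set" where
  "pres_class S R w = {v. pres_rel S R w v}"

text \<open>The group \<langle>S | R\<rangle> (relations assumed to be words over S).\<close>

definition pres_group :: "'a set \<Rightarrow> ('a list \<times> 'a list) set \<Rightarrow> 'a gword set monoid" where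
  "pres_group S R =
     \<lparr>carrier = pres_class S R ` gwords S,
      mult = (\<lambda>A B. \<Union>a\<in>A. \<Union>b\<in>B. pres_class S R (a @ b)),
      one = pres_class S R []\<rparr>"

definition pres_gen :: "'a set \<Rightarrow> ('a list \<times> 'a list) set \<Rightarrow> 'a \<Rightarrow> 'a gword set" where
  "pres_gen S R x = pres_class S R [(x, False)]"

inductive mpres_rel :: "'a set \<Rightarrow> ('a list \<times> 'a list) set \<Rightarrow> 'a list \<Rightarrow> 'a list \<Rightarrow> bool"
  for S R where
  refl: "set w \<subseteq> S \<Longrightarrow> mpres_rel S R w w"
| sym: "mpres_rel S R u w \<Longrightarrow> mpres_rel S R w u"
| trans: "mpres_rel S R u v \<Longrightarrow> mpres_rel S R v w \<Longrightarrow> mpres_rel S R u w"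
| rel: "(l, r) \<in> R \<Longrightarrow> set u \<subseteq> S \<Longrightarrow> set v \<subseteq> S \<Longrightarrow>
    mpres_rel S R (u @ l @ v) (u @ r @ v)"

definition mpres_class :: "'a set \<Rightarrow> ('a list \<times> 'a list) set \<Rightarrow> 'a list \<Rightarrow> 'a list set" where
  "mpres_class S R w = {v. mpres_rel S R w v}"

definition mpres_monoid :: "'a set \<Rightarrow> ('a list \<times> 'a list) set \<Rightarrow> 'a list set monoid" where
  "mpres_monoid S R =
     \<lparr>carrier = mpres_class S R ` lists S,
      mult = (\<lambda>A B. \<Union>a\<in>A. \<Union>b\<in>B. mpres_class S R (a @ b)),
      one = mpres_class S R []\<rparr>"

text \<open>The canonical monoid homomorphism \<langle>S | R\<rangle>^+ \<rightarrow> \<langle>S | R\<rangle>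
  (well defined: equal classes are sent to equal classes).\<close>

definition mon_to_grp :: "'a set \<Rightarrow> ('a list \<times> 'a list) set \<Rightarrow> 'a list set \<Rightarrow> 'a gword set" where
  "mon_to_grp S R C = pres_class S R (pos_word (SOME w. w \<in> C))"

inductive_set monoid_generated :: "('a, 'b) monoid_scheme \<Rightarrow> 'a set \<Rightarrow> 'a set"
  for M A where
  one: "\<one>\<^bsub>M\<^esub> \<in> monoid_generated M A"
| step: "x \<in> monoid_generated M A \<Longrightarrow> a \<in> A \<Longrightarrow> x \<otimes>\<^bsub>M\<^esub> a \<in> monoid_generated M A"

definition braid_rels :: "nat \<Rightarrow> (nat list \<times> nat list) set" where
  "braid_rels n =
     {([i, i+1, i], [i+1, i, i+1]) | i. 1 \<le> i \<and> i < n}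
     \<union> {([i, j], [j, i]) | i j. i \<in> {1..n} \<and> j \<in> {1..n} \<and> (i + 1 < j \<or> j + 1 < i)}"

text \<open>B_{n+1}, generators sigma_1, ..., sigma_n.\<close>
definition Braid :: "nat \<Rightarrow> nat gword set monoid" where
  "Braid n = pres_group {1..n} (braid_rels n)"

definition sigma :: "nat \<Rightarrow> nat \<Rightarrow> nat gword set" where
  "sigma n i = pres_gen {1..n} (braid_rels n) i"

definition sigma_prefix :: "nat \<Rightarrow> nat \<Rightarrow> nat gword set" where
  "sigma_prefix n i = pres_class {1..n} (braid_rels n) (pos_word [1..<i+1])"

definition Sigma_mon :: "nat \<Rightarrow> nat gword set set" where
  "Sigma_mon n = monoid_generated (Braid n) (sigma_prefix n ` {1..n})"

definition H_rels :: "nat \<Rightarrow> (nat list \<times> nat list) set" where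
  "H_rels n = {([1, j, i], [i+1, j]) | i j. 1 \<le> i \<and> i < j \<and> j \<le> n}"

definition Hgrp :: "nat \<Rightarrow> nat gword set monoid" where
  "Hgrp n = pres_group {1..n} (H_rels n)"

definition Hmon :: "nat \<Rightarrow> nat list set monoid" where
  "Hmon n = mpres_monoid {1..n} (H_rels n)"

definition rho :: "nat \<Rightarrow> nat \<Rightarrow> nat gword set" where
  "rho n i = (if i = 0 then \<one>\<^bsub>Hgrp n\<^esub> else pres_gen {1..n} (H_rels n) i)"

definition Hmon_image :: "nat \<Rightarrow> nat gword set set" where
  "Hmon_image n = mon_to_grp {1..n} (H_rels n) ` carrier (Hmon n)"

end

theory Submission
  imports Defs
begin


definition wfR :: "'a set \<Rightarrow> ('a list \<times> 'a list) set \<Rightarrow> bool" where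
  "wfR S R \<longleftrightarrow> (\<forall>(l,r)\<in>R. set l \<subseteq> S \<and> set r \<subseteq> S)"

lemma gwords_append[simp]: "u @ v \<in> gwords S \<longleftrightarrow> u \<in> gwords S \<and> v \<in> gwords S"
  by (auto simp: gwords_def)

lemma gwords_Cons[simp]: "x # v \<in> gwords S \<longleftrightarrow> fst x \<in> S \<and> v \<in> gwords S"
  by (auto simp: gwords_def)

lemma gwords_Nil[simp]: "[] \<in> gwords S"
  by (auto simp: gwords_def)

lemma pos_word_gwords[simp]: "pos_word l \<in> gwords S \<longleftrightarrow> set l \<subseteq> S"
  by (simp add: gwords_def pos_word_def image_image)

lemma pos_word_append[simp]: "pos_word (u @ v) = pos_word u @ pos_word v"
  by (simp add: pos_word_def)

lemma pres_rel_gwords: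
  assumes "pres_rel S R u v" "wfR S R"
  shows "u \<in> gwords S \<and> v \<in> gwords S"
  using assms by (induction rule: pres_rel.induct) (auto simp: wfR_def)

lemma pres_rel_app_right:
  assumes "pres_rel S R u v" "w \<in> gwords S" "wfR S R"
  shows "pres_rel S R (u @ w) (v @ w)"
  using assms
proof (induction rule: pres_rel.induct)
  case (refl w') then show ?case by (auto intro: pres_rel.refl)
next
  case (sym u w') then show ?case by (auto intro: pres_rel.sym)
next
  case (trans u v w') then show ?case by (metis pres_rel.trans)
next
  case (cancel u v a b)
  then show ?case using pres_rel.cancel[of u S "v @ w" a R b] by simp
next
  case (rel l r u v)
  then show ?case using pres_rel.rel[of l r R u S "v @ w"] by simp
qed

lemma pres_rel_app_left:
  assumes "pres_rel S R u v" "w \<in> gwords S" "wfR S R"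
  shows "pres_rel S R (w @ u) (w @ v)"
  using assms
proof (induction rule: pres_rel.induct)
  case (refl w') then show ?case by (auto intro: pres_rel.refl)
next
  case (sym u w') then show ?case by (auto intro: pres_rel.sym)
next
  case (trans u v w') then show ?case by (metis pres_rel.trans)
next
  case (cancel u v a b)
  then show ?case using pres_rel.cancel[of "w @ u" S v a R b] by simp
next
  case (rel l r u v)
  then show ?case using pres_rel.rel[of l r R "w @ u" S v] by simp
qed

lemma pres_rel_app:
  assumes "pres_rel S R a a'" "pres_rel S R b b'" "wfR S R"
  shows "pres_rel S R (a @ b) (a' @ b')"
proof -
  have "pres_rel S R (a @ b) (a' @ b)"
    using assms pres_rel_app_right pres_rel_gwords by blast
  moreover have "pres_rel S R (a' @ b) (a' @ b')"
    using assms pres_rel_app_left pres_rel_gwords by blast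
  ultimately show ?thesis by (rule pres_rel.trans)
qed

lemma pres_class_eq:
  assumes "pres_rel S R u v"
  shows "pres_class S R u = pres_class S R v"
proof -
  have "pres_rel S R u x \<longleftrightarrow> pres_rel S R v x" for x
  proof
    assume "pres_rel S R u x" then show "pres_rel S R v x"
      using pres_rel.trans[OF pres_rel.sym[OF assms]] by blast
  next
    assume "pres_rel S R v x" then show "pres_rel S R u x"
      using pres_rel.trans[OF assms] by blast
  qed
  then show ?thesis unfolding pres_class_def by blast
qed

lemma pres_class_self: "w \<in> gwords S \<Longrightarrow> w \<in> pres_class S R w"
  by (simp add: pres_class_def pres_rel.refl)

lemma pres_class_eq_iff:
  assumes "u \<in> gwords S"
  shows "pres_class S R u = pres_class S R v \<longleftrightarrow> pres_rel S R u v"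
proof
  assume "pres_class S R u = pres_class S R v"
  then have "u \<in> pres_class S R v" using pres_class_self[OF assms] by auto
  then show "pres_rel S R u v" by (simp add: pres_class_def pres_rel.sym)
qed (rule pres_class_eq)

lemma pres_mult:
  assumes "a \<in> gwords S" "b \<in> gwords S" "wfR S R"
  shows "mult (pres_group S R) (pres_class S R a) (pres_class S R b) = pres_class S R (a @ b)"
proof -
  have E: "pres_class S R (a' @ b') = pres_class S R (a @ b)"
    if "a' \<in> pres_class S R a" "b' \<in> pres_class S R b" for a' b'
  proof -
    have "pres_rel S R a a'" "pres_rel S R b b'" using that by (auto simp: pres_class_def)
    then have "pres_rel S R (a @ b) (a' @ b')" using pres_rel_app assms(3) by blast
    then show ?thesis by (rule pres_class_eq[symmetric])
  qed
  moreover have "a \<in> pres_class S R a" "b \<in> pres_class S R b"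
    using assms by (auto simp: pres_class_self)
  have "(\<Union>a'\<in>pres_class S R a. \<Union>b'\<in>pres_class S R b. pres_class S R (a' @ b')) = pres_class S R (a @ b)"
  proof (rule equalityI)
    show "(\<Union>a'\<in>pres_class S R a. \<Union>b'\<in>pres_class S R b. pres_class S R (a' @ b')) \<subseteq> pres_class S R (a @ b)"
      using E by blast
    show "pres_class S R (a @ b) \<subseteq> (\<Union>a'\<in>pres_class S R a. \<Union>b'\<in>pres_class S R b. pres_class S R (a' @ b'))"
      using \<open>a \<in> pres_class S R a\<close> \<open>b \<in> pres_class S R b\<close> by blast
  qed
  then show ?thesis unfolding pres_group_def by simp
qed

definition winv :: "'a gword \<Rightarrow> 'a gword" where
  "winv w = rev (map (\<lambda>(a,b). (a, \<not> b)) w)"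

lemma winv_gwords[simp]: "winv w \<in> gwords S \<longleftrightarrow> w \<in> gwords S"
proof -
  have "fst ` set (winv w) = fst ` set w"
    by (simp add: winv_def image_image case_prod_beta)
  then show ?thesis by (simp add: gwords_def)
qed

lemma winv_winv[simp]: "winv (winv w) = w"
  by (induction w) (auto simp: winv_def)

lemma winv_cancel:
  assumes "w \<in> gwords S" "wfR S R"
  shows "pres_rel S R (w @ winv w) []"
  using assms
proof (induction w)
  case Nil then show ?case by (simp add: winv_def pres_rel.refl)
next
  case (Cons x w)
  obtain a b where x: "x = (a, b)" by (cases x)
  have eq: "(x # w) @ winv (x # w) = [x] @ (w @ winv w) @ [(a, \<not> b)]"
    by (simp add: winv_def x)
  have "pres_rel S R ([x] @ (w @ winv w) @ [(a, \<not> b)]) ([x] @ [] @ [(a, \<not> b)])"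
  proof -
    have wg: "w \<in> gwords S" "a \<in> S" using Cons.prems x by auto
    have "pres_rel S R ((w @ winv w) @ [(a, \<not> b)]) ([] @ [(a, \<not> b)])"
      using pres_rel_app_right[OF Cons.IH[OF wg(1) assms(2)]] wg assms(2) by simp
    then show ?thesis
      using pres_rel_app_left[of S R _ _ "[x]"] wg assms(2) x by simp
  qed
  moreover have "pres_rel S R ([x] @ [] @ [(a, \<not> b)]) []"
    using pres_rel.cancel[of "[]" S "[]" a R b] Cons x by simp
  ultimately show ?case using eq pres_rel.trans by metis
qed

lemma pres_group_carrier: "carrier (pres_group S R) = pres_class S R ` gwords S"
  by (simp add: pres_group_def)

lemma pres_group_one: "one (pres_group S R) = pres_class S R []"
  by (simp add: pres_group_def)

lemma pres_group_is_group:
  assumes "wfR S R"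
  shows "group (pres_group S R)"
proof (rule groupI)
  fix x y assume "x \<in> carrier (pres_group S R)" "y \<in> carrier (pres_group S R)"
  then show "x \<otimes>\<^bsub>pres_group S R\<^esub> y \<in> carrier (pres_group S R)"
    using assms by (auto simp: pres_group_carrier pres_mult)
next
  show "\<one>\<^bsub>pres_group S R\<^esub> \<in> carrier (pres_group S R)"
    by (auto simp: pres_group_carrier pres_group_one)
next
  fix x y z assume "x \<in> carrier (pres_group S R)" "y \<in> carrier (pres_group S R)"
    "z \<in> carrier (pres_group S R)"
  then show "x \<otimes>\<^bsub>pres_group S R\<^esub> y \<otimes>\<^bsub>pres_group S R\<^esub> z =
       x \<otimes>\<^bsub>pres_group S R\<^esub> (y \<otimes>\<^bsub>pres_group S R\<^esub> z)"
    using assms by (auto simp: pres_group_carrier pres_mult)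
next
  fix x assume "x \<in> carrier (pres_group S R)"
  then show "\<one>\<^bsub>pres_group S R\<^esub> \<otimes>\<^bsub>pres_group S R\<^esub> x = x"
    using assms pres_mult[of "[]" S] by (auto simp: pres_group_carrier pres_group_one)
next
  fix x assume "x \<in> carrier (pres_group S R)"
  then obtain w where w: "w \<in> gwords S" "x = pres_class S R w"
    by (auto simp: pres_group_carrier)
  have "pres_rel S R (winv w @ w) []"
    using winv_cancel[of "winv w" S R] w assms by simp
  then have "pres_class S R (winv w) \<otimes>\<^bsub>pres_group S R\<^esub> x = \<one>\<^bsub>pres_group S R\<^esub>"
    using w assms by (simp add: pres_mult pres_group_one pres_class_eq)
  then show "\<exists>y\<in>carrier (pres_group S R). y \<otimes>\<^bsub>pres_group S R\<^esub> x = \<one>\<^bsub>pres_group S R\<^esub>"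
    using w by (auto simp: pres_group_carrier)
qed



definition evw :: "('g,'m) monoid_scheme \<Rightarrow> ('a \<Rightarrow> 'g) \<Rightarrow> 'a gword \<Rightarrow> 'g" where
  "evw G f w = foldr (\<lambda>x acc. (if snd x then inv\<^bsub>G\<^esub> (f (fst x)) else f (fst x)) \<otimes>\<^bsub>G\<^esub> acc) w \<one>\<^bsub>G\<^esub>"

lemma evw_Nil[simp]: "evw G f [] = \<one>\<^bsub>G\<^esub>"
  by (simp add: evw_def)

lemma evw_Cons[simp]: "evw G f (x # w) = (if snd x then inv\<^bsub>G\<^esub> (f (fst x)) else f (fst x)) \<otimes>\<^bsub>G\<^esub> evw G f w"
  by (simp add: evw_def)

lemma evw_closed:
  assumes "group G" "f ` S \<subseteq> carrier G" "w \<in> gwords S"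
  shows "evw G f w \<in> carrier G"
proof -
  interpret G: group G by fact
  show ?thesis using assms(3) by (induction w) (use assms(2) in auto)
qed

lemma evw_append:
  assumes "group G" "f ` S \<subseteq> carrier G" "u \<in> gwords S" "v \<in> gwords S"
  shows "evw G f (u @ v) = evw G f u \<otimes>\<^bsub>G\<^esub> evw G f v"
proof -
  interpret G: group G by fact
  show ?thesis using assms(3)
  proof (induction u)
    case Nil then show ?case using evw_closed[OF assms(1,2,4)] by simp
  next
    case (Cons x u)
    have c: "evw G f u \<in> carrier G" "evw G f v \<in> carrier G" "f (fst x) \<in> carrier G"
      using evw_closed[OF assms(1,2)] Cons assms by auto
    show ?case using Cons c by (simp add: G.m_assoc)
  qed
qed

definition relsHold :: "('g,'m) monoid_scheme \<Rightarrow> ('a \<Rightarrow> 'g) \<Rightarrow> ('a list \<times> 'a list) set \<Rightarrow> bool" where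
  "relsHold G f R \<longleftrightarrow> (\<forall>(l,r)\<in>R. evw G f (pos_word l) = evw G f (pos_word r))"

lemma evw_respects:
  assumes "group G" "f ` S \<subseteq> carrier G" "wfR S R" "relsHold G f R"
    and "pres_rel S R u v"
  shows "evw G f u = evw G f v"
  using assms(5)
proof (induction rule: pres_rel.induct)
  case (cancel u v a b)
  interpret G: group G by fact
  have c: "f a \<in> carrier G" using cancel assms by auto
  have "evw G f ([(a, b), (a, \<not> b)]) = \<one>\<^bsub>G\<^esub>"
    using c by simp
  have cv: "evw G f v \<in> carrier G" using evw_closed[OF assms(1,2)] cancel by simp
  have "evw G f ([(a, b), (a, \<not> b)] @ v) = evw G f v"
    using c cv by (cases b) (simp_all add: G.m_assoc[symmetric])
  then show ?case using cancel evw_append[OF assms(1,2)] by simp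
next
  case (rel l r u v)
  have "set l \<subseteq> S" "set r \<subseteq> S" using rel assms(3) by (auto simp: wfR_def)
  moreover have "evw G f (pos_word l) = evw G f (pos_word r)"
    using rel assms(4) by (auto simp: relsHold_def)
  ultimately show ?case using rel evw_append[OF assms(1,2)] by simp
qed auto

definition ind :: "('g,'m) monoid_scheme \<Rightarrow> ('a \<Rightarrow> 'g) \<Rightarrow> 'a gword set \<Rightarrow> 'g" where
  "ind G f C = evw G f (SOME w. w \<in> C)"

lemma ind_class:
  assumes "group G" "f ` S \<subseteq> carrier G" "wfR S R" "relsHold G f R" "w \<in> gwords S"
  shows "ind G f (pres_class S R w) = evw G f w"
proof -
  have "w \<in> pres_class S R w" using assms(5) by (rule pres_class_self)
  then have "(SOME v. v \<in> pres_class S R w) \<in> pres_class S R w" by (rule someI)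
  then have "pres_rel S R w (SOME v. v \<in> pres_class S R w)" by (simp add: pres_class_def)
  then show ?thesis unfolding ind_def using evw_respects[OF assms(1-4)] by metis
qed

lemma ind_hom:
  assumes "group G" "f ` S \<subseteq> carrier G" "wfR S R" "relsHold G f R"
  shows "ind G f \<in> hom (pres_group S R) G"
  unfolding hom_def
proof (safe)
  fix x assume "x \<in> carrier (pres_group S R)"
  then obtain w where "w \<in> gwords S" "x = pres_class S R w" by (auto simp: pres_group_carrier)
  then show "ind G f x \<in> carrier G" using ind_class[OF assms] evw_closed[OF assms(1,2)] by simp
next
  fix x y assume "x \<in> carrier (pres_group S R)" "y \<in> carrier (pres_group S R)"
  then obtain u v where "u \<in> gwords S" "x = pres_class S R u" "v \<in> gwords S" "y = pres_class S R v"
    by (auto simp: pres_group_carrier)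
  then show "ind G f (x \<otimes>\<^bsub>pres_group S R\<^esub> y) = ind G f x \<otimes>\<^bsub>G\<^esub> ind G f y"
    using ind_class[OF assms] pres_mult[OF _ _ assms(3)] evw_append[OF assms(1,2)] by simp
qed

lemma pres_gen_closed:
  "a \<in> S \<Longrightarrow> pres_gen S R a \<in> carrier (pres_group S R)"
  by (auto simp: pres_gen_def pres_group_carrier)

lemma pres_gen_inv:
  assumes "wfR S R" "a \<in> S"
  shows "inv\<^bsub>pres_group S R\<^esub> (pres_gen S R a) = pres_class S R [(a, True)]"
proof -
  interpret P: group "pres_group S R" using pres_group_is_group[OF assms(1)] .
  have "pres_rel S R ([] @ [(a, True), (a, \<not> True)] @ []) ([] @ [])"
    using assms by (intro pres_rel.cancel) auto
  then have "pres_class S R [(a, True)] \<otimes>\<^bsub>pres_group S R\<^esub> pres_gen S R a = \<one>\<^bsub>pres_group S R\<^esub>"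
    using assms by (simp add: pres_gen_def pres_mult pres_group_one pres_class_eq)
  then show ?thesis
    by (rule P.inv_equality) (use assms in \<open>auto simp: pres_gen_def pres_group_carrier\<close>)
qed

lemma evw_gen:
  assumes "wfR S R" "w \<in> gwords S"
  shows "evw (pres_group S R) (pres_gen S R) w = pres_class S R w"
  using assms(2)
proof (induction w)
  case Nil then show ?case by (simp add: pres_group_one)
next
  case (Cons x w)
  obtain a b where x: "x = (a, b)" by (cases x)
  have "pres_class S R ((a, b) # w) = mult (pres_group S R) (pres_class S R [(a, b)]) (pres_class S R w)"
    using pres_mult[OF _ _ assms(1), of "[(a,b)]" w] Cons x by simp
  then show ?case using Cons x pres_gen_inv[OF assms(1)] by (simp add: pres_gen_def)
qed

lemma hom_evw:
  assumes "group G" "group K" "h \<in> hom G K" "g ` S \<subseteq> carrier G" "w \<in> gwords S"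
  shows "h (evw G g w) = evw K (h \<circ> g) w"
  using assms(5)
proof (induction w)
  case Nil then show ?case using hom_one[OF assms(3,1,2)] by simp
next
  case (Cons x w)
  interpret gh: group_hom G K h using assms by (simp add: group_hom_def group_hom_axioms_def)
  have c: "g (fst x) \<in> carrier G" "evw G g w \<in> carrier G"
    using Cons assms evw_closed[OF assms(1,4)] by auto
  show ?case using Cons c by (simp add: hom_mult[OF assms(3)])
qed

lemma evw_cong:
  assumes "w \<in> gwords S" "\<And>a. a \<in> S \<Longrightarrow> f a = g a"
  shows "evw G f w = evw G g w"
  using assms by (induction w) auto



lemma wfR_braid: "wfR {1..n} (braid_rels n)"
  by (auto simp: wfR_def braid_rels_def)

lemma wfR_H: "wfR {1..n} (H_rels n)"
  by (auto simp: wfR_def H_rels_def)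

lemma group_Braid: "group (Braid n)"
  unfolding Braid_def by (rule pres_group_is_group[OF wfR_braid])

lemma group_Hgrp: "group (Hgrp n)"
  unfolding Hgrp_def by (rule pres_group_is_group[OF wfR_H])

lemma class_pos2:
  assumes "wfR S R" "a \<in> S" "b \<in> S"
  shows "pres_class S R (pos_word [a, b]) = pres_gen S R a \<otimes>\<^bsub>pres_group S R\<^esub> pres_gen S R b"
  using pres_mult[OF _ _ assms(1), of "[(a,False)]" "[(b,False)]"] assms
  by (simp add: pos_word_def pres_gen_def)

lemma class_pos3:
  assumes "wfR S R" "a \<in> S" "b \<in> S" "c \<in> S"
  shows "pres_class S R (pos_word [a, b, c]) =
    pres_gen S R a \<otimes>\<^bsub>pres_group S R\<^esub> pres_gen S R b \<otimes>\<^bsub>pres_group S R\<^esub> pres_gen S R c"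
  using pres_mult[OF _ _ assms(1), of "[(a,False)]" "[(b,False)]"]
    pres_mult[OF _ _ assms(1), of "[(a,False),(b,False)]" "[(c,False)]"] assms
  by (simp add: pos_word_def pres_gen_def)

lemma class_rel:
  assumes "(l, r) \<in> R" "wfR S R"
  shows "pres_class S R (pos_word l) = pres_class S R (pos_word r)"
proof -
  have "set l \<subseteq> S" "set r \<subseteq> S" using assms by (auto simp: wfR_def)
  then have "pres_rel S R ([] @ pos_word l @ []) ([] @ pos_word r @ [])"
    using assms by (intro pres_rel.rel) auto
  then show ?thesis by (simp add: pres_class_eq)
qed

locale bh =
  fixes n :: nat
  assumes n1: "1 \<le> n"
begin

abbreviation "B \<equiv> Braid n"
abbreviation "s \<equiv> sigma n"
abbreviation "pfx \<equiv> sigma_prefix n"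

sublocale B: group B by (rule group_Braid)

lemma s_closed[simp]: "1 \<le> i \<Longrightarrow> i \<le> n \<Longrightarrow> s i \<in> carrier B"
  by (auto simp: sigma_def Braid_def intro: pres_gen_closed)

lemma pfx_closed[simp]: "i \<le> n \<Longrightarrow> pfx i \<in> carrier B"
proof -
  assume "i \<le> n"
  then have "pos_word [1..<i+1] \<in> gwords {1..n}" by auto
  then show ?thesis unfolding sigma_prefix_def Braid_def pres_group_carrier by (rule imageI)
qed

lemma pfx_0: "pfx 0 = \<one>\<^bsub>B\<^esub>"
  by (simp add: sigma_prefix_def Braid_def pres_group_one pos_word_def)

lemma pfx_Suc: "Suc i \<le> n \<Longrightarrow> pfx (Suc i) = pfx i \<otimes>\<^bsub>B\<^esub> s (Suc i)"
proof -
  assume a: "Suc i \<le> n"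
  have u: "[1..<Suc i + 1] = [1..<i+1] @ [Suc i]" by simp
  have g: "pos_word [1..<i+1] \<in> gwords {1..n}" using a by auto
  show ?thesis
    unfolding sigma_prefix_def Braid_def sigma_def pres_gen_def u pos_word_append
    using pres_mult[OF g _ wfR_braid, of "[(Suc i, False)]"] a by (simp add: pos_word_def)
qed

lemma s_comm: "1 \<le> k \<Longrightarrow> k + 2 \<le> m \<Longrightarrow> m \<le> n \<Longrightarrow> s m \<otimes>\<^bsub>B\<^esub> s k = s k \<otimes>\<^bsub>B\<^esub> s m"
proof -
  assume a: "1 \<le> k" "k + 2 \<le> m" "m \<le> n"
  have "([m, k], [k, m]) \<in> braid_rels n" using a by (auto simp: braid_rels_def)
  from class_rel[OF this wfR_braid] show ?thesis
    using a class_pos2[OF wfR_braid, of m n k] class_pos2[OF wfR_braid, of k n m]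
    by (simp add: Braid_def sigma_def)
qed

lemma s_braid: "1 \<le> k \<Longrightarrow> k < n \<Longrightarrow>
  s k \<otimes>\<^bsub>B\<^esub> s (k+1) \<otimes>\<^bsub>B\<^esub> s k = s (k+1) \<otimes>\<^bsub>B\<^esub> s k \<otimes>\<^bsub>B\<^esub> s (k+1)"
proof -
  assume a: "1 \<le> k" "k < n"
  have "([k, k+1, k], [k+1, k, k+1]) \<in> braid_rels n" using a by (auto simp: braid_rels_def)
  from class_rel[OF this wfR_braid] show ?thesis
    using a class_pos3[OF wfR_braid, of k n "k+1" k] class_pos3[OF wfR_braid, of "k+1" n k "k+1"]
    by (simp add: Braid_def sigma_def)
qed

lemma s_pfx_comm: "p + 2 \<le> m \<Longrightarrow> m \<le> n \<Longrightarrow> s m \<otimes>\<^bsub>B\<^esub> pfx p = pfx p \<otimes>\<^bsub>B\<^esub> s m"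
proof (induction p)
  case 0 then show ?case by (simp add: pfx_0)
next
  case (Suc p)
  have "s m \<otimes>\<^bsub>B\<^esub> pfx (Suc p) = (s m \<otimes>\<^bsub>B\<^esub> pfx p) \<otimes>\<^bsub>B\<^esub> s (Suc p)"
    using Suc.prems by (simp add: pfx_Suc B.m_assoc)
  also have "\<dots> = pfx p \<otimes>\<^bsub>B\<^esub> (s m \<otimes>\<^bsub>B\<^esub> s (Suc p))"
    using Suc by (simp add: B.m_assoc)
  also have "\<dots> = pfx p \<otimes>\<^bsub>B\<^esub> (s (Suc p) \<otimes>\<^bsub>B\<^esub> s m)"
    using Suc.prems s_comm[of "Suc p" m] by simp
  also have "\<dots> = pfx (Suc p) \<otimes>\<^bsub>B\<^esub> s m"
    using Suc.prems by (simp add: pfx_Suc B.m_assoc)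
  finally show ?case .
qed

lemma pfx_shift_aux: "1 \<le> k \<Longrightarrow> k + 1 + d \<le> n \<Longrightarrow>
  pfx (k + 1 + d) \<otimes>\<^bsub>B\<^esub> s k = s (k+1) \<otimes>\<^bsub>B\<^esub> pfx (k + 1 + d)"
proof (induction d)
  case 0
  then obtain k' where k: "k = Suc k'" by (cases k) auto
  have "pfx (k + 1 + 0) \<otimes>\<^bsub>B\<^esub> s k = pfx k' \<otimes>\<^bsub>B\<^esub> (s k \<otimes>\<^bsub>B\<^esub> s (k+1) \<otimes>\<^bsub>B\<^esub> s k)"
    using 0 k by (simp add: pfx_Suc B.m_assoc)
  also have "\<dots> = pfx k' \<otimes>\<^bsub>B\<^esub> (s (k+1) \<otimes>\<^bsub>B\<^esub> s k \<otimes>\<^bsub>B\<^esub> s (k+1))"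
    using 0 s_braid[of k] by simp
  also have "\<dots> = (s (k+1) \<otimes>\<^bsub>B\<^esub> pfx k') \<otimes>\<^bsub>B\<^esub> (s k \<otimes>\<^bsub>B\<^esub> s (k+1))"
    using 0 k s_pfx_comm[of k' "k+1"] by (simp add: B.m_assoc)
  also have "\<dots> = s (k+1) \<otimes>\<^bsub>B\<^esub> pfx (k + 1 + 0)"
    using 0 k by (simp add: pfx_Suc B.m_assoc)
  finally show ?case .
next
  case (Suc d)
  let ?j = "k + 1 + d"
  have "pfx (k + 1 + Suc d) \<otimes>\<^bsub>B\<^esub> s k = pfx ?j \<otimes>\<^bsub>B\<^esub> (s (Suc ?j) \<otimes>\<^bsub>B\<^esub> s k)"
    using Suc.prems by (simp add: pfx_Suc B.m_assoc)
  also have "\<dots> = (pfx ?j \<otimes>\<^bsub>B\<^esub> s k) \<otimes>\<^bsub>B\<^esub> s (Suc ?j)"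
    using Suc.prems s_comm[of k "Suc ?j"] by (simp add: B.m_assoc)
  also have "\<dots> = s (k+1) \<otimes>\<^bsub>B\<^esub> (pfx ?j \<otimes>\<^bsub>B\<^esub> s (Suc ?j))"
    using Suc by (simp add: B.m_assoc)
  also have "\<dots> = s (k+1) \<otimes>\<^bsub>B\<^esub> pfx (k + 1 + Suc d)"
    using Suc.prems by (simp add: pfx_Suc)
  finally show ?case .
qed

lemma pfx_shift: "1 \<le> k \<Longrightarrow> k < j \<Longrightarrow> j \<le> n \<Longrightarrow>
  pfx j \<otimes>\<^bsub>B\<^esub> s k = s (k+1) \<otimes>\<^bsub>B\<^esub> pfx j"
  using pfx_shift_aux[of k "j - k - 1"] by simp

primrec Q :: "nat \<Rightarrow> nat gword set" where
  "Q 0 = \<one>\<^bsub>B\<^esub>"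
| "Q (Suc i) = Q i \<otimes>\<^bsub>B\<^esub> s (i + 2)"

lemma Q_closed[simp]: "i + 1 \<le> n \<Longrightarrow> Q i \<in> carrier B"
  by (induction i) auto

lemma s1_Q: "i + 1 \<le> n \<Longrightarrow> s 1 \<otimes>\<^bsub>B\<^esub> Q i = pfx (i + 1)"
proof (induction i)
  case 0 then show ?case using pfx_Suc[of 0] by (simp add: pfx_0)
next
  case (Suc i)
  have "s 1 \<otimes>\<^bsub>B\<^esub> Q (Suc i) = (s 1 \<otimes>\<^bsub>B\<^esub> Q i) \<otimes>\<^bsub>B\<^esub> s (i + 2)"
    using Suc.prems by (simp add: B.m_assoc)
  then show ?case using Suc pfx_Suc[of "i+1"] by simp
qed

lemma pfx_pfx: "i < j \<Longrightarrow> j \<le> n \<Longrightarrow> pfx j \<otimes>\<^bsub>B\<^esub> pfx i = Q i \<otimes>\<^bsub>B\<^esub> pfx j"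
proof (induction i)
  case 0 then show ?case by (simp add: pfx_0)
next
  case (Suc i)
  have "pfx j \<otimes>\<^bsub>B\<^esub> pfx (Suc i) = (pfx j \<otimes>\<^bsub>B\<^esub> pfx i) \<otimes>\<^bsub>B\<^esub> s (Suc i)"
    using Suc.prems by (simp add: pfx_Suc B.m_assoc)
  also have "\<dots> = Q i \<otimes>\<^bsub>B\<^esub> (pfx j \<otimes>\<^bsub>B\<^esub> s (Suc i))"
    using Suc by (simp add: B.m_assoc)
  also have "\<dots> = Q i \<otimes>\<^bsub>B\<^esub> (s (i + 2) \<otimes>\<^bsub>B\<^esub> pfx j)"
    using Suc.prems pfx_shift[of "Suc i" j] by simp
  also have "\<dots> = Q (Suc i) \<otimes>\<^bsub>B\<^esub> pfx j"
    using Suc.prems by (simp add: B.m_assoc)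
  finally show ?case .
qed

lemma H_rel_in_B: "1 \<le> i \<Longrightarrow> i < j \<Longrightarrow> j \<le> n \<Longrightarrow>
  pfx 1 \<otimes>\<^bsub>B\<^esub> (pfx j \<otimes>\<^bsub>B\<^esub> pfx i) = pfx (i+1) \<otimes>\<^bsub>B\<^esub> pfx j"
proof -
  assume a: "1 \<le> i" "i < j" "j \<le> n"
  have p1: "pfx 1 = s 1" using pfx_Suc[of 0] n1 by (simp add: pfx_0)
  have "pfx 1 \<otimes>\<^bsub>B\<^esub> (pfx j \<otimes>\<^bsub>B\<^esub> pfx i) = (s 1 \<otimes>\<^bsub>B\<^esub> Q i) \<otimes>\<^bsub>B\<^esub> pfx j"
    using a p1 pfx_pfx[of i j] by (simp add: B.m_assoc)
  then show ?thesis using a s1_Q[of i] by simp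
qed

lemma relsHold_B: "relsHold B pfx (H_rels n)"
  unfolding relsHold_def H_rels_def
  using H_rel_in_B by (auto simp: pos_word_def)

end



lemma (in group) conj_swap:
  assumes "x \<in> carrier G" "a \<in> carrier G" "b \<in> carrier G" "x \<otimes> a = b \<otimes> x"
  shows "a \<otimes> inv x = inv x \<otimes> b"
proof -
  have "inv x \<otimes> b = inv x \<otimes> ((b \<otimes> x) \<otimes> inv x)" using assms by (simp add: m_assoc)
  also have "\<dots> = inv x \<otimes> ((x \<otimes> a) \<otimes> inv x)" using assms(4) by simp
  also have "\<dots> = a \<otimes> inv x" using assms(1-3) by (simp add: m_assoc[symmetric])
  finally show ?thesis by simp
qed

context bh begin

abbreviation "H \<equiv> Hgrp n"
abbreviation "r \<equiv> rho n"
definition t :: "nat \<Rightarrow> nat gword set" where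
  "t i = inv\<^bsub>H\<^esub> (r (i - 1)) \<otimes>\<^bsub>H\<^esub> r i"

sublocale Hg: group H by (rule group_Hgrp)

lemma r_closed[simp]: "i \<le> n \<Longrightarrow> r i \<in> carrier H"
proof (cases "i = 0")
  case True then show ?thesis by (simp add: rho_def)
next
  case False then show "i \<le> n \<Longrightarrow> ?thesis" by (auto simp: rho_def Hgrp_def intro: pres_gen_closed)
qed

lemma r_0: "r 0 = \<one>\<^bsub>H\<^esub>"
  by (simp add: rho_def)

lemma t_closed[simp]: "1 \<le> i \<Longrightarrow> i \<le> n \<Longrightarrow> t i \<in> carrier H"
  by (simp add: t_def)

lemma r_rel: "1 \<le> i \<Longrightarrow> i < j \<Longrightarrow> j \<le> n \<Longrightarrow>
  r 1 \<otimes>\<^bsub>H\<^esub> r j \<otimes>\<^bsub>H\<^esub> r i = r (i+1) \<otimes>\<^bsub>H\<^esub> r j"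
proof -
  assume a: "1 \<le> i" "i < j" "j \<le> n"
  have "([1, j, i], [i+1, j]) \<in> H_rels n" using a by (auto simp: H_rels_def)
  from class_rel[OF this wfR_H] show ?thesis
    using a class_pos3[OF wfR_H, of 1 n j i] class_pos2[OF wfR_H, of "i+1" n j]
    by (simp add: Hgrp_def rho_def)
qed

lemma r_step: "1 \<le> m \<Longrightarrow> m \<le> n \<Longrightarrow> r m = r (m - 1) \<otimes>\<^bsub>H\<^esub> t m"
  by (simp add: t_def Hg.m_assoc[symmetric])

lemma A: "1 \<le> k \<Longrightarrow> k < j \<Longrightarrow> j \<le> n \<Longrightarrow>
  r k \<otimes>\<^bsub>H\<^esub> r j = r 1 \<otimes>\<^bsub>H\<^esub> r j \<otimes>\<^bsub>H\<^esub> r (k - 1)"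
proof -
  assume a: "1 \<le> k" "k < j" "j \<le> n"
  show ?thesis
  proof (cases "k = 1")
    case True then show ?thesis using a by (simp add: r_0)
  next
    case False
    then show ?thesis using a r_rel[of "k - 1" j] by simp
  qed
qed

lemma conj: "1 \<le> k \<Longrightarrow> k < j \<Longrightarrow> j \<le> n \<Longrightarrow>
  r j \<otimes>\<^bsub>H\<^esub> t k = t (k+1) \<otimes>\<^bsub>H\<^esub> r j"
proof -
  assume a: "1 \<le> k" "k < j" "j \<le> n"
  have c: "r k \<in> carrier H" "r j \<in> carrier H" "r (k-1) \<in> carrier H" "r 1 \<in> carrier H"
    "r (k+1) \<in> carrier H" using a by auto
  have e1: "r 1 \<otimes>\<^bsub>H\<^esub> r j = (r k \<otimes>\<^bsub>H\<^esub> r j) \<otimes>\<^bsub>H\<^esub> inv\<^bsub>H\<^esub> (r (k - 1))"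
    using Hg.inv_solve_right[of "r 1 \<otimes>\<^bsub>H\<^esub> r j" "r k \<otimes>\<^bsub>H\<^esub> r j" "r (k-1)"] c A[OF a] by simp
  have e2: "r j \<otimes>\<^bsub>H\<^esub> inv\<^bsub>H\<^esub> (r (k - 1)) = inv\<^bsub>H\<^esub> (r k) \<otimes>\<^bsub>H\<^esub> (r 1 \<otimes>\<^bsub>H\<^esub> r j)"
    using Hg.inv_solve_left[of "r j \<otimes>\<^bsub>H\<^esub> inv\<^bsub>H\<^esub> (r (k - 1))" "r k" "r 1 \<otimes>\<^bsub>H\<^esub> r j"] c e1
    by (simp add: Hg.m_assoc)
  have "r j \<otimes>\<^bsub>H\<^esub> t k = (r j \<otimes>\<^bsub>H\<^esub> inv\<^bsub>H\<^esub> (r (k - 1))) \<otimes>\<^bsub>H\<^esub> r k"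
    using c by (simp add: t_def Hg.m_assoc)
  also have "\<dots> = inv\<^bsub>H\<^esub> (r k) \<otimes>\<^bsub>H\<^esub> (r 1 \<otimes>\<^bsub>H\<^esub> r j \<otimes>\<^bsub>H\<^esub> r k)"
    using e2 c by (simp add: Hg.m_assoc)
  also have "\<dots> = inv\<^bsub>H\<^esub> (r k) \<otimes>\<^bsub>H\<^esub> (r (k+1) \<otimes>\<^bsub>H\<^esub> r j)"
    using r_rel[of k j] a by simp
  also have "\<dots> = t (k+1) \<otimes>\<^bsub>H\<^esub> r j"
    using c by (simp add: t_def Hg.m_assoc)
  finally show ?thesis .
qed

lemma t_comm: "1 \<le> i \<Longrightarrow> i + 2 \<le> k \<Longrightarrow> k \<le> n \<Longrightarrow>
  t i \<otimes>\<^bsub>H\<^esub> t k = t k \<otimes>\<^bsub>H\<^esub> t i"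
proof -
  assume a: "1 \<le> i" "i + 2 \<le> k" "k \<le> n"
  have c: "r (k-1) \<in> carrier H" "r k \<in> carrier H" "t i \<in> carrier H" "t (i+1) \<in> carrier H"
    using a by auto
  have sw: "t i \<otimes>\<^bsub>H\<^esub> inv\<^bsub>H\<^esub> (r (k-1)) = inv\<^bsub>H\<^esub> (r (k-1)) \<otimes>\<^bsub>H\<^esub> t (i+1)"
    using Hg.conj_swap[OF c(1) c(3) c(4)] conj[of i "k-1"] a by simp
  have "t i \<otimes>\<^bsub>H\<^esub> t k = (t i \<otimes>\<^bsub>H\<^esub> inv\<^bsub>H\<^esub> (r (k-1))) \<otimes>\<^bsub>H\<^esub> r k"
    using c by (simp add: t_def Hg.m_assoc)
  also have "\<dots> = inv\<^bsub>H\<^esub> (r (k-1)) \<otimes>\<^bsub>H\<^esub> (t (i+1) \<otimes>\<^bsub>H\<^esub> r k)"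
    using sw c by (simp add: Hg.m_assoc)
  also have "\<dots> = inv\<^bsub>H\<^esub> (r (k-1)) \<otimes>\<^bsub>H\<^esub> (r k \<otimes>\<^bsub>H\<^esub> t i)"
    using conj[of i k] a by simp
  also have "\<dots> = t k \<otimes>\<^bsub>H\<^esub> t i"
    using c by (simp add: t_def Hg.m_assoc)
  finally show ?thesis .
qed

lemma t_r_comm: "p + 2 \<le> m \<Longrightarrow> m \<le> n \<Longrightarrow> t m \<otimes>\<^bsub>H\<^esub> r p = r p \<otimes>\<^bsub>H\<^esub> t m"
proof (induction p)
  case 0 then show ?case by (simp add: r_0)
next
  case (Suc p)
  have "t m \<otimes>\<^bsub>H\<^esub> r (Suc p) = (t m \<otimes>\<^bsub>H\<^esub> r p) \<otimes>\<^bsub>H\<^esub> t (Suc p)"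
    using Suc.prems r_step[of "Suc p"] by (simp add: Hg.m_assoc)
  also have "\<dots> = r p \<otimes>\<^bsub>H\<^esub> (t m \<otimes>\<^bsub>H\<^esub> t (Suc p))"
    using Suc by (simp add: Hg.m_assoc)
  also have "\<dots> = r p \<otimes>\<^bsub>H\<^esub> (t (Suc p) \<otimes>\<^bsub>H\<^esub> t m)"
    using Suc.prems t_comm[of "Suc p" m] by simp
  also have "\<dots> = r (Suc p) \<otimes>\<^bsub>H\<^esub> t m"
    using Suc.prems r_step[of "Suc p"] by (simp add: Hg.m_assoc)
  finally show ?case .
qed

lemma t_braid: "1 \<le> k \<Longrightarrow> k < n \<Longrightarrow>
  t k \<otimes>\<^bsub>H\<^esub> t (k+1) \<otimes>\<^bsub>H\<^esub> t k = t (k+1) \<otimes>\<^bsub>H\<^esub> t k \<otimes>\<^bsub>H\<^esub> t (k+1)"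
proof -
  assume a: "1 \<le> k" "k < n"
  have c: "r (k-1) \<in> carrier H" "t k \<in> carrier H" "t (k+1) \<in> carrier H" using a by auto
  have rk1: "r (k+1) = r (k-1) \<otimes>\<^bsub>H\<^esub> t k \<otimes>\<^bsub>H\<^esub> t (k+1)"
    using a r_step[of k] r_step[of "k+1"] by simp
  have "r (k-1) \<otimes>\<^bsub>H\<^esub> (t k \<otimes>\<^bsub>H\<^esub> t (k+1) \<otimes>\<^bsub>H\<^esub> t k) = r (k+1) \<otimes>\<^bsub>H\<^esub> t k"
    using rk1 c by (simp add: Hg.m_assoc)
  also have "\<dots> = t (k+1) \<otimes>\<^bsub>H\<^esub> r (k+1)"
    using conj[of k "k+1"] a by simp
  also have "\<dots> = (t (k+1) \<otimes>\<^bsub>H\<^esub> r (k-1)) \<otimes>\<^bsub>H\<^esub> (t k \<otimes>\<^bsub>H\<^esub> t (k+1))"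
    using rk1 c by (simp add: Hg.m_assoc)
  also have "\<dots> = r (k-1) \<otimes>\<^bsub>H\<^esub> (t (k+1) \<otimes>\<^bsub>H\<^esub> t k \<otimes>\<^bsub>H\<^esub> t (k+1))"
    using t_r_comm[of "k-1" "k+1"] a c by (simp add: Hg.m_assoc)
  finally show ?thesis using c by simp
qed

lemma relsHold_H: "relsHold H t (braid_rels n)"
  unfolding relsHold_def
proof (intro ballI, clarify)
  fix l rr assume "(l, rr) \<in> braid_rels n"
  then consider (b) i where "l = [i,i+1,i]" "rr = [i+1,i,i+1]" "1 \<le> i" "i < n"
     | (c) i j where "l = [i,j]" "rr = [j,i]" "i \<in> {1..n}" "j \<in> {1..n}" "i+1<j \<or> j+1<i"
    unfolding braid_rels_def by blast
  then show "evw H t (pos_word l) = evw H t (pos_word rr)"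
  proof cases
    case b then show ?thesis using t_braid[of i] by (simp add: pos_word_def Hg.m_assoc)
  next
    case c then show ?thesis
      using t_comm[of i j] t_comm[of j i] by (cases "i+1<j") (simp_all add: pos_word_def)
  qed
qed

lemma evw_t_pfx: "i \<le> n \<Longrightarrow> evw H t (pos_word [1..<i+1]) = r i"
proof (induction i)
  case 0 then show ?case by (simp add: r_0 pos_word_def)
next
  case (Suc i)
  have u: "[1..<Suc i + 1] = [1..<i+1] @ [Suc i]" by simp
  have "t ` {1..n} \<subseteq> carrier H" by auto
  then have "evw H t (pos_word [1..<i+1] @ pos_word [Suc i]) = evw H t (pos_word [1..<i+1]) \<otimes>\<^bsub>H\<^esub> evw H t (pos_word [Suc i])"
    using Suc.prems group_Hgrp[of n] evw_append[of "Hgrp n" t "{1..n}" "pos_word [1..<i+1]" "pos_word [Suc i]"]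
    by (simp del: upt_Suc add: subset_iff)
  also have "\<dots> = r i \<otimes>\<^bsub>H\<^esub> t (Suc i)"
    using Suc by (simp add: pos_word_def del: upt_Suc)
  also have "\<dots> = r (Suc i)" using Suc.prems r_step[of "Suc i"] by simp
  finally show ?case unfolding u pos_word_append .
qed

end



lemma mpres_to_pres:
  assumes "mpres_rel S R u v" "wfR S R"
  shows "pres_rel S R (pos_word u) (pos_word v)"
  using assms(1)
proof (induction rule: mpres_rel.induct)
  case (refl w) then show ?case by (intro pres_rel.refl) simp
next
  case (sym u w) show ?case using sym.IH by (rule pres_rel.sym)
next
  case (trans u v w) show ?case using trans.IH by (rule pres_rel.trans)
next
  case (rel l r u v)
  then show ?case using pres_rel.rel[of l r R "pos_word u" S "pos_word v"] by simp
qed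

lemma mon_to_grp_class:
  assumes "set w \<subseteq> S" "wfR S R"
  shows "mon_to_grp S R (mpres_class S R w) = pres_class S R (pos_word w)"
proof -
  have "w \<in> mpres_class S R w" using assms by (simp add: mpres_class_def mpres_rel.refl)
  then have "(SOME v. v \<in> mpres_class S R w) \<in> mpres_class S R w" by (rule someI)
  then have "mpres_rel S R w (SOME v. v \<in> mpres_class S R w)" by (simp add: mpres_class_def)
  then have "pres_rel S R (pos_word w) (pos_word (SOME v. v \<in> mpres_class S R w))"
    using assms(2) by (rule mpres_to_pres)
  then show ?thesis unfolding mon_to_grp_def by (simp add: pres_class_eq)
qed

context bh begin

definition phi where "phi = ind B pfx"
definition psi where "psi = ind H t"

lemma pfxS: "pfx ` {1..n} \<subseteq> carrier B" by auto
lemma tS: "t ` {1..n} \<subseteq> carrier H" by auto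

lemma phi_hom: "phi \<in> hom H B"
  unfolding phi_def Hgrp_def
  by (rule ind_hom[OF group_Braid pfxS wfR_H relsHold_B])

lemma psi_hom: "psi \<in> hom B H"
  unfolding psi_def Braid_def
  by (rule ind_hom[OF group_Hgrp tS wfR_braid relsHold_H])

lemma phi_class: "w \<in> gwords {1..n} \<Longrightarrow> phi (pres_class {1..n} (H_rels n) w) = evw B pfx w"
  unfolding phi_def by (rule ind_class[OF group_Braid pfxS wfR_H relsHold_B])

lemma psi_class: "w \<in> gwords {1..n} \<Longrightarrow> psi (pres_class {1..n} (braid_rels n) w) = evw H t w"
  unfolding psi_def by (rule ind_class[OF group_Hgrp tS wfR_braid relsHold_H])

lemma phi_r: "i \<le> n \<Longrightarrow> phi (r i) = pfx i"
proof (cases "i = 0")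
  case True then show ?thesis
    using hom_one[OF phi_hom group_Hgrp group_Braid] by (simp add: r_0 pfx_0)
next
  case False
  assume "i \<le> n"
  then have "phi (r i) = evw B pfx [(i, False)]"
    using False phi_class[of "[(i, False)]"] by (simp add: rho_def pres_gen_def)
  then show ?thesis using False \<open>i \<le> n\<close> by simp
qed

lemma psi_pfx: "i \<le> n \<Longrightarrow> psi (pfx i) = r i"
  unfolding sigma_prefix_def using psi_class[of "pos_word [1..<i+1]"] evw_t_pfx[of i]
  by (simp del: upt_Suc add: subset_iff)

lemma phi_t: "1 \<le> i \<Longrightarrow> i \<le> n \<Longrightarrow> phi (t i) = s i"
proof -
  assume a: "1 \<le> i" "i \<le> n"
  interpret gh: group_hom H B phi
    using phi_hom by (simp add: group_hom_def group_hom_axioms_def Hg.group_axioms B.group_axioms)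
  have "phi (t i) = inv\<^bsub>B\<^esub> (pfx (i - 1)) \<otimes>\<^bsub>B\<^esub> pfx i"
    using a by (simp add: t_def hom_mult[OF phi_hom] phi_r)
  also have "\<dots> = inv\<^bsub>B\<^esub> (pfx (i - 1)) \<otimes>\<^bsub>B\<^esub> (pfx (i - 1) \<otimes>\<^bsub>B\<^esub> s i)"
    using a pfx_Suc[of "i - 1"] by simp
  also have "\<dots> = s i" using a by (simp add: B.m_assoc[symmetric])
  finally show ?thesis .
qed

lemma psi_s: "1 \<le> i \<Longrightarrow> i \<le> n \<Longrightarrow> psi (s i) = t i"
  unfolding sigma_def pres_gen_def using psi_class[of "[(i, False)]"] by simp

lemma psi_phi: "x \<in> carrier H \<Longrightarrow> psi (phi x) = x"
proof -
  assume "x \<in> carrier H"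
  then obtain w where w: "w \<in> gwords {1..n}" "x = pres_class {1..n} (H_rels n) w"
    by (auto simp: Hgrp_def pres_group_carrier)
  have "psi (phi x) = psi (evw B pfx w)" using w phi_class by simp
  also have "\<dots> = evw H (psi \<circ> pfx) w"
    by (rule hom_evw[OF group_Braid group_Hgrp psi_hom pfxS w(1)])
  also have "\<dots> = evw H (pres_gen {1..n} (H_rels n)) w"
    by (rule evw_cong[OF w(1)]) (simp add: psi_pfx rho_def)
  also have "\<dots> = x" unfolding Hgrp_def using evw_gen[OF wfR_H w(1)] w(2) by simp
  finally show ?thesis .
qed

lemma phi_psi: "y \<in> carrier B \<Longrightarrow> phi (psi y) = y"
proof -
  assume "y \<in> carrier B"
  then obtain w where w: "w \<in> gwords {1..n}" "y = pres_class {1..n} (braid_rels n) w"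
    by (auto simp: Braid_def pres_group_carrier)
  have "phi (psi y) = phi (evw H t w)" using w psi_class by simp
  also have "\<dots> = evw B (phi \<circ> t) w"
    by (rule hom_evw[OF group_Hgrp group_Braid phi_hom tS w(1)])
  also have "\<dots> = evw B (pres_gen {1..n} (braid_rels n)) w"
    by (rule evw_cong[OF w(1)]) (simp add: phi_t sigma_def)
  also have "\<dots> = y" unfolding Braid_def using evw_gen[OF wfR_braid w(1)] w(2) by simp
  finally show ?thesis .
qed

lemma phi_iso: "phi \<in> iso H B"
proof -
  have "phi \<in> carrier H \<rightarrow> carrier B" "psi \<in> carrier B \<rightarrow> carrier H"
    using phi_hom psi_hom by (auto simp: hom_def)
  then have "bij_betw phi (carrier H) (carrier B)"
    using psi_phi phi_psi by (intro bij_betwI[of phi _ _ psi]) auto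
  then show ?thesis using phi_hom by (simp add: iso_def)
qed

lemma inv_phi_s: "1 \<le> i \<Longrightarrow> i \<le> n \<Longrightarrow> inv_into (carrier H) phi (s i) = t i"
proof -
  assume a: "1 \<le> i" "i \<le> n"
  have "inj_on phi (carrier H)" using phi_iso by (simp add: iso_def bij_betw_def)
  then show ?thesis using a phi_t by (intro inv_into_f_eq) auto
qed

lemma Hmon_image_eq: "Hmon_image n = (\<lambda>w. pres_class {1..n} (H_rels n) (pos_word w)) ` lists {1..n}"
  unfolding Hmon_image_def Hmon_def mpres_monoid_def
  using mon_to_grp_class[OF _ wfR_H] by (force simp: image_image in_lists_conv_set subset_iff)

lemma Sigma_eq: "Sigma_mon n = (\<lambda>w. evw B pfx (pos_word w)) ` lists {1..n}"
proof (rule equalityI)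
  show "Sigma_mon n \<subseteq> (\<lambda>w. evw B pfx (pos_word w)) ` lists {1..n}"
  proof
    fix x assume "x \<in> Sigma_mon n"
    then show "x \<in> (\<lambda>w. evw B pfx (pos_word w)) ` lists {1..n}"
      unfolding Sigma_mon_def
    proof (induction rule: monoid_generated.induct)
      case one
      show ?case by (rule image_eqI[of _ _ "[]"]) (auto simp: pos_word_def)
    next
      case (step x a)
      from step.IH obtain w where w12: "w \<in> lists {1..n}" "x = evw B pfx (pos_word w)" by blast
      from step.hyps(2) obtain i where w34: "i \<in> {1..n}" "a = pfx i" by blast
      note w = w12 w34
      have g: "pos_word w \<in> gwords {1..n}" "pos_word [i] \<in> gwords {1..n}"
        using w by (auto simp: lists_eq_set)
      have "evw B pfx (pos_word (w @ [i])) = x \<otimes>\<^bsub>B\<^esub> a"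
        using w(2-4) evw_append[OF group_Braid pfxS g] by (simp add: pos_word_def)
      then show ?case using w by (intro image_eqI[of _ _ "w @ [i]"]) auto
    qed
  qed
next
  show "(\<lambda>w. evw B pfx (pos_word w)) ` lists {1..n} \<subseteq> Sigma_mon n"
  proof
    fix x assume "x \<in> (\<lambda>w. evw B pfx (pos_word w)) ` lists {1..n}"
    then obtain w where w: "w \<in> lists {1..n}" "x = evw B pfx (pos_word w)" by auto
    have "evw B pfx (pos_word w) \<in> Sigma_mon n" using w(1)
    proof (induction w rule: rev_induct)
      case Nil then show ?case by (simp add: Sigma_mon_def pos_word_def monoid_generated.one)
    next
      case (snoc i w)
      have g: "pos_word w \<in> gwords {1..n}" "pos_word [i] \<in> gwords {1..n}"
        using snoc.prems by (auto simp: lists_eq_set)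
      have "evw B pfx (pos_word (w @ [i])) = evw B pfx (pos_word w) \<otimes>\<^bsub>B\<^esub> pfx i"
        using snoc.prems evw_append[OF group_Braid pfxS g] by (simp add: pos_word_def)
      then show ?case using snoc unfolding Sigma_mon_def
        by (auto intro: monoid_generated.step)
    qed
    then show "x \<in> Sigma_mon n" using w by simp
  qed
qed

lemma phi_Hmon: "phi ` Hmon_image n = Sigma_mon n"
  unfolding Hmon_image_eq Sigma_eq image_image
proof (intro image_cong refl)
  fix w assume "w \<in> lists {1..n}"
  then have "pos_word w \<in> gwords {1..n}" by (auto simp: lists_eq_set)
  then show "phi (pres_class {1..n} (H_rels n) (pos_word w)) = evw B pfx (pos_word w)"
    by (rule phi_class)
qed simp

end

theorem proposition5p2:
  fixes n :: nat
  assumes "n \<ge> 1"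
  shows "\<exists>\<phi>. \<phi> \<in> iso (Hgrp n) (Braid n)
           \<and> (\<forall>i\<in>{1..n}. \<phi> (rho n i) = sigma_prefix n i)
           \<and> (\<forall>i\<in>{1..n}. inv_into (carrier (Hgrp n)) \<phi> (sigma n i)
                = inv\<^bsub>Hgrp n\<^esub> (rho n (i - 1)) \<otimes>\<^bsub>Hgrp n\<^esub> rho n i)
           \<and> \<phi> ` Hmon_image n = Sigma_mon n"
proof -
  interpret bh n using assms by unfold_locales
  show ?thesis
    by (intro exI[of _ phi] conjI ballI phi_iso phi_Hmon)
       (auto simp: phi_r inv_phi_s t_def)
qed

end
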